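(* Let $S$ be a countably compact Hausdorff topological Clifford semigroup which is a strong semilattice of topological groups. The following are equivalent: (1) $S$ is metrizable; (2) $E(S)$ is a $G_\delta$-subset of $S$; (3) for every $e\in E(S)$, the singleton $\{e\}$ is a $G_\delta$-subset of $G_e$.
   Context: A Clifford semigroup is an inverse semigroup (each $x$ has a unique $x^{-1}$ with $xx^{-1}x=x$, $x^{-1}xx^{-1}=x^{-1}$) with $xx^{-1}=x^{-1}x$ for all $x$; topological means multiplication and inversion are continuous. $E(S)$ is the set of idempotents, ordered by $e\le f\iff ef=e$; $G_e:=\{x: xx^{-1}=e\}$; $\varphi_{f,e}\colon G_f\to G_e$, $x\mapsto ex$. $S$ is a strong semilattice of topological groups if the bonding maps are continuous and the topology of $S$ is the disjoint-union topology of the subspaces $G_e$. A $G_\delta$-subset is a countable intersection of open sets. Known fact that may be used (Metrizability of Clifford topological semigroups, Thm 3.4): a countably compact Hausdorff topological Clifford semigroup $S$ is metrizable provided $E(S)$ is a metrizable $G_\delta$-subset of $S$. *)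

theory Defs
  imports "HOL-Analysis.Analysis"
begin

definition clifford_inv :: "'a set \<Rightarrow> ('a \<Rightarrow> 'a \<Rightarrow> 'a) \<Rightarrow> 'a \<Rightarrow> 'a" where
  "clifford_inv S m x = (THE y. y \<in> S \<and> m (m x y) x = x \<and> m (m y x) y = y)"

definition clifford_semigroup :: "'a set \<Rightarrow> ('a \<Rightarrow> 'a \<Rightarrow> 'a) \<Rightarrow> bool" where
  "clifford_semigroup S m \<longleftrightarrow>
     (\<forall>x\<in>S. \<forall>y\<in>S. m x y \<in> S) \<and>
     (\<forall>x\<in>S. \<forall>y\<in>S. \<forall>z\<in>S. m (m x y) z = m x (m y z)) \<and>
     (\<forall>x\<in>S. \<exists>!y. y \<in> S \<and> m (m x y) x = x \<and> m (m y x) y = y) \<and>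
     (\<forall>x\<in>S. m x (clifford_inv S m x) = m (clifford_inv S m x) x)"

definition topological_clifford_semigroup :: "'a topology \<Rightarrow> ('a \<Rightarrow> 'a \<Rightarrow> 'a) \<Rightarrow> bool" where
  "topological_clifford_semigroup X m \<longleftrightarrow>
     clifford_semigroup (topspace X) m \<and>
     continuous_map (prod_topology X X) X (\<lambda>(x, y). m x y) \<and>
     continuous_map X X (clifford_inv (topspace X) m)"

definition idempotents :: "'a set \<Rightarrow> ('a \<Rightarrow> 'a \<Rightarrow> 'a) \<Rightarrow> 'a set" where
  "idempotents S m = {e \<in> S. m e e = e}"

definition group_component :: "'a set \<Rightarrow> ('a \<Rightarrow> 'a \<Rightarrow> 'a) \<Rightarrow> 'a \<Rightarrow> 'a set" where
  "group_component S m e = {x \<in> S. m x (clifford_inv S m x) = e}"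

text \<open>Strong semilattice of topological groups: the bonding maps
  G_f \<rightarrow> G_e, x \<mapsto> e x (for idempotents e \<le> f, i.e. e f = e) are continuous,
  and the topology of S is the disjoint-union topology of the subspaces G_e.\<close>
definition strong_semilattice_of_top_groups :: "'a topology \<Rightarrow> ('a \<Rightarrow> 'a \<Rightarrow> 'a) \<Rightarrow> bool" where
  "strong_semilattice_of_top_groups X m \<longleftrightarrow>
     (let S = topspace X; E = idempotents S m; G = group_component S m in
       (\<forall>e\<in>E. \<forall>f\<in>E. m e f = e \<longrightarrow>
          continuous_map (subtopology X (G f)) (subtopology X (G e)) (\<lambda>x. m e x)) \<and>
       (\<forall>U. U \<subseteq> S \<longrightarrow>
          (openin X U \<longleftrightarrow> (\<forall>e\<in>E. openin (subtopology X (G e)) (U \<inter> G e)))))"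

definition countably_compact_space :: "'a topology \<Rightarrow> bool" where
  "countably_compact_space X \<longleftrightarrow>
     (\<forall>\<U>. countable \<U> \<and> (\<forall>U\<in>\<U>. openin X U) \<and> topspace X \<subseteq> \<Union>\<U> \<longrightarrow>
        (\<exists>\<F>\<subseteq>\<U>. finite \<F> \<and> topspace X \<subseteq> \<Union>\<F>))"

end

theory Submission
  imports Defs
begin

lemma regular_nbhd:
  assumes "regular_space X" "openin X W" "x \<in> W"
  obtains V where "openin X V" "x \<in> V" "X closure_of V \<subseteq> W"
proof -
  have "closedin X (topspace X - W)" using assms by blast
  moreover have "x \<in> topspace X - (topspace X - W)" using assms openin_subset by fastforce
  ultimately obtain V where "openin X V" "x \<in> V" "disjnt (topspace X - W) (X closure_of V)"
    using assms(1) unfolding regular_space by blast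
  moreover have "X closure_of V \<subseteq> topspace X" by (rule closure_of_subset_topspace)
  ultimately have "X closure_of V \<subseteq> W" by (auto simp: disjnt_def)
  with \<open>openin X V\<close> \<open>x \<in> V\<close> show ?thesis using that by blast
qed

lemma Urysohn_metrization:
  assumes reg: "regular_space X" and hd: "Hausdorff_space X" and sc: "second_countable X"
  shows "metrizable_space X"
proof -
  obtain \<B> where Bc: "countable \<B>" and Bo': "\<forall>V \<in> \<B>. openin X V"
    and Bb': "\<forall>U x. openin X U \<and> x \<in> U \<longrightarrow> (\<exists>V \<in> \<B>. x \<in> V \<and> V \<subseteq> U)"
    using sc unfolding second_countable_def by blast
  have Bo: "\<And>V. V \<in> \<B> \<Longrightarrow> openin X V" using Bo' by blast
  have Bb: "\<And>U x. openin X U \<Longrightarrow> x \<in> U \<Longrightarrow> \<exists>V \<in> \<B>. x \<in> V \<and> V \<subseteq> U"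
    using Bb' by blast
  have "hereditarily normal_space X"
    using regular_second_countable_imp_hereditarily_normal_space[of X] reg sc by simp
  then have "normal_space (subtopology X (topspace X))"
    unfolding hereditarily_def by (erule_tac x="topspace X" in allE) simp
  then have nor: "normal_space X" by simp
  define P where "P = {(B1,B2). B1 \<in> \<B> \<and> B2 \<in> \<B> \<and> X closure_of B1 \<subseteq> B2}"
  have "P \<subseteq> \<B> \<times> \<B>" unfolding P_def by blast
  then have Pc: "countable P" by (rule countable_subset) (simp add: Bc)
  have "\<exists>g. continuous_map X (top_of_set {0..1::real}) g \<and> g ` (X closure_of fst p) \<subseteq> {0}
          \<and> g ` (topspace X - snd p) \<subseteq> {1}" if "p \<in> P" for p
  proof -
    obtain B1 B2 where p: "p = (B1,B2)" "B1 \<in> \<B>" "B2 \<in> \<B>" "X closure_of B1 \<subseteq> B2"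
      using \<open>p \<in> P\<close> by (auto simp: P_def)
    have "closedin X (topspace X - B2)" using Bo p by blast
    moreover have "disjnt (X closure_of B1) (topspace X - B2)" using p by (auto simp: disjnt_def)
    ultimately obtain f where "continuous_map X (top_of_set {0..1::real}) f"
       "f ` (X closure_of B1) \<subseteq> {0}" "f ` (topspace X - B2) \<subseteq> {1}"
      using Urysohn_lemma[OF nor closedin_closure_of, of "topspace X - B2" B1 0 1] by auto
    then show ?thesis using p by auto
  qed
  then have "\<forall>p\<in>P. \<exists>g. continuous_map X (top_of_set {0..1::real}) g \<and> g ` (X closure_of fst p) \<subseteq> {0}
          \<and> g ` (topspace X - snd p) \<subseteq> {1}" by blast
  then obtain g where gall: "\<forall>p\<in>P. continuous_map X (top_of_set {0..1::real}) (g p) \<and> g p ` (X closure_of fst p) \<subseteq> {0}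
          \<and> g p ` (topspace X - snd p) \<subseteq> {1}"
    by (rule bchoice[elim_format]) blast
  have gc: "\<And>p. p \<in> P \<Longrightarrow> continuous_map X (top_of_set {0..1::real}) (g p)"
    and g0: "\<And>p. p \<in> P \<Longrightarrow> g p ` (X closure_of fst p) \<subseteq> {0}"
    and g1: "\<And>p. p \<in> P \<Longrightarrow> g p ` (topspace X - snd p) \<subseteq> {1}"
    using gall by auto
  have sep: "\<exists>p\<in>P. x \<in> fst p \<and> snd p \<subseteq> U" if "openin X U" "x \<in> U" for U x
  proof -
    obtain B2 where B2: "B2 \<in> \<B>" "x \<in> B2" "B2 \<subseteq> U" using Bb[OF \<open>openin X U\<close> \<open>x \<in> U\<close>] by blast
    obtain V where V: "openin X V" "x \<in> V" "X closure_of V \<subseteq> B2"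
      using regular_nbhd[OF reg Bo[OF B2(1)] B2(2)] by blast
    obtain B1 where B1: "B1 \<in> \<B>" "x \<in> B1" "B1 \<subseteq> V" using Bb[OF V(1,2)] by blast
    have "X closure_of B1 \<subseteq> B2" using closure_of_mono[OF B1(3)] V(3) by blast
    then have "(B1,B2) \<in> P" using B1(1) B2(1) by (simp add: P_def)
    then show ?thesis using B1(2) B2(3) by force
  qed
  have fsub: "g p x = 0" if "p \<in> P" "x \<in> fst p" for p x
  proof -
    have "fst p \<in> \<B>" using that(1) by (auto simp: P_def)
    then have "fst p \<subseteq> topspace X" by (meson Bo openin_subset)
    then have "x \<in> X closure_of fst p" using closure_of_subset that(2) by blast
    then show ?thesis using g0[OF that(1)] by blast
  qed
  define Y where "Y = product_topology (\<lambda>p. top_of_set {0..1::real}) P"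
  define e where "e = (\<lambda>x. \<lambda>p\<in>P. g p x)"
  have gx01: "g p x \<in> {0..1}" if "p \<in> P" "x \<in> topspace X" for p x
    using gc[OF that(1)] that(2) by (auto simp: continuous_map_def)
  have ce: "continuous_map X Y e"
    unfolding Y_def e_def continuous_map_componentwise
  proof (intro conjI ballI)
    show "(\<lambda>x. \<lambda>p\<in>P. g p x) ` topspace X \<subseteq> extensional P" by auto
    fix k assume "k \<in> P"
    then show "continuous_map X (top_of_set {0..1}) (\<lambda>x. (\<lambda>p\<in>P. g p x) k)"
      using gc by simp
  qed
  have inj: "e x \<noteq> e y" if xy: "x \<noteq> y" "x \<in> topspace X" "y \<in> topspace X" for x y
  proof -
    have "openin X (topspace X - {y})"
      using hd by (simp add: closedin_Hausdorff_singleton openin_diff xy)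
    then obtain p where p: "p \<in> P" "x \<in> fst p" "snd p \<subseteq> topspace X - {y}"
      using sep[of "topspace X - {y}" x] xy by auto
    have "g p x = 0" using fsub[OF p(1) p(2)] .
    moreover have "g p y = 1" using g1[OF p(1)] p(3) xy by auto
    ultimately have "e x p \<noteq> e y p" using p(1) by (simp add: e_def)
    then show ?thesis by metis
  qed
  then have injo: "inj_on e (topspace X)" by (meson inj_onI)
  define e' where "e' = inv_into (topspace X) e"
  have e': "\<And>x. x \<in> topspace X \<Longrightarrow> e' (e x) = x"
    unfolding e'_def using injo by (rule inv_into_f_f)
  have "continuous_map (subtopology Y (e ` topspace X)) X e'"
  proof (clarsimp simp add: continuous_map_atin limitin_atin openin_subtopology_alt e')
    fix x U
    assume "x \<in> topspace X" and "openin X U" and "x \<in> U"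
    then obtain p where p: "p \<in> P" "x \<in> fst p" "snd p \<subseteq> U" using sep by blast
    have gx: "g p x = 0" using fsub[OF p(1) p(2)] .
    have "openin (top_of_set {0..1}) {0..<1::real}"
      using open_real_greaterThanLessThan[of "-1" 1] by (force simp: openin_open)
    moreover have "e x \<in> (\<Pi>\<^sub>E q\<in>P. if q = p then {0..<1} else {0..1})"
      using gx gx01 \<open>x \<in> topspace X\<close> by (auto simp: e_def PiE_iff)
    moreover have "e y = e x"
      if "y \<notin> U" and ey: "e y \<in> (\<Pi>\<^sub>E q\<in>P. if q = p then {0..<1} else {0..1})"
           and y: "y \<in> topspace X" for y
    proof -
      have "e y p \<in> {0..<1}" using ey p(1) by (auto simp: PiE_iff)
      moreover have "g p y = 1" using g1[OF p(1)] p(3) y \<open>y \<notin> U\<close> by auto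
      ultimately show ?thesis using p(1) by (auto simp: e_def)
    qed
    ultimately
    show "\<exists>W. openin Y W \<and> e x \<in> W \<and> e' ` (e ` topspace X \<inter> W - {e x}) \<subseteq> U"
      apply (rule_tac x="PiE P (\<lambda>q. if q = p then {0..<1} else {0..1})" in exI)
      by (auto simp: openin_PiE_gen e' Y_def)
  qed
  with e' ce have "embedding_map X Y e"
    unfolding embedding_map_def homeomorphic_map_maps homeomorphic_maps_def
    by (fastforce simp: continuous_map_in_subtopology)
  then have hom: "X homeomorphic_space subtopology Y (e ` topspace X)"
    by (rule embedding_map_imp_homeomorphic_space)
  have "metrizable_space Y"
  proof (cases "P = {}")
    case True
    then show ?thesis
      by (simp add: Y_def) (metis metrizable_space_discrete_topology product_topology_empty_discrete)
  next
    case False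
    have "(\<lambda>p\<in>P. 0::real) \<in> topspace Y" by (auto simp: Y_def)
    then have "topspace Y \<noteq> {}" by blast
    then show ?thesis unfolding Y_def
      by (intro metrizable_topology_D)
         (auto intro: countable_subset[OF _ Pc] metrizable_space_subtopology metrizable_space_euclidean simp: Y_def)
  qed
  then show ?thesis
    using hom homeomorphic_metrizable_space metrizable_space_subtopology by blast
qed


locale tcs =
  fixes X :: "'a topology" and m :: "'a \<Rightarrow> 'a \<Rightarrow> 'a"
  assumes tcs: "topological_clifford_semigroup X m"
begin

abbreviation "S \<equiv> topspace X"
abbreviation "iv \<equiv> clifford_inv (topspace X) m"
abbreviation "E \<equiv> idempotents (topspace X) m"
abbreviation "G \<equiv> group_component (topspace X) m"

lemma cs: "clifford_semigroup S m"
  using tcs by (simp add: topological_clifford_semigroup_def)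

lemma cs_all: "(\<forall>x\<in>S. \<forall>y\<in>S. m x y \<in> S) \<and>
     (\<forall>x\<in>S. \<forall>y\<in>S. \<forall>z\<in>S. m (m x y) z = m x (m y z)) \<and>
     (\<forall>x\<in>S. \<exists>!y. y \<in> S \<and> m (m x y) x = x \<and> m (m y x) y = y) \<and>
     (\<forall>x\<in>S. m x (iv x) = m (iv x) x)"
  using cs by (simp only: clifford_semigroup_def)

lemma mem_m: "x \<in> S \<Longrightarrow> y \<in> S \<Longrightarrow> m x y \<in> S"
  using conjunct1[OF cs_all] by blast

lemma assoc: "x \<in> S \<Longrightarrow> y \<in> S \<Longrightarrow> z \<in> S \<Longrightarrow> m (m x y) z = m x (m y z)"
  using conjunct1[OF conjunct2[OF cs_all]] by blast

lemma ex1_inv: "x \<in> S \<Longrightarrow> \<exists>!y. y \<in> S \<and> m (m x y) x = x \<and> m (m y x) y = y"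
  using conjunct1[OF conjunct2[OF conjunct2[OF cs_all]]] by (rule bspec)

lemma inv_props:
  assumes "x \<in> S"
  shows "iv x \<in> S \<and> m (m x (iv x)) x = x \<and> m (m (iv x) x) (iv x) = iv x"
  unfolding clifford_inv_def by (rule theI'[OF ex1_inv[OF assms]])

lemma inv_uniq:
  assumes "x \<in> S" "y \<in> S" "m (m x y) x = x" "m (m y x) y = y"
  shows "iv x = y"
  unfolding clifford_inv_def
  by (rule the1_equality[OF ex1_inv[OF assms(1)]]) (simp add: assms)

lemma inv_comm: "x \<in> S \<Longrightarrow> m x (iv x) = m (iv x) x"
  using conjunct2[OF conjunct2[OF conjunct2[OF cs_all]]] by (rule bspec)

lemma E_iff: "e \<in> E \<longleftrightarrow> e \<in> S \<and> m e e = e"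
  by (simp add: idempotents_def)

lemma G_iff: "x \<in> G e \<longleftrightarrow> x \<in> S \<and> m x (iv x) = e"
  by (simp add: group_component_def)

lemma inv_idem: "e \<in> E \<Longrightarrow> iv e = e"
  by (rule inv_uniq) (auto simp: E_iff)

lemma e_in_G: "e \<in> E \<Longrightarrow> e \<in> G e"
  by (simp add: G_iff inv_idem) (simp add: E_iff)

lemma cover_G: "x \<in> S \<Longrightarrow> m x (iv x) \<in> E \<and> x \<in> G (m x (iv x))"
proof -
  assume x: "x \<in> S"
  then have i: "iv x \<in> S" using inv_props by blast
  have "m (m x (iv x)) (m x (iv x)) = m (m (m x (iv x)) x) (iv x)"
    using x i by (simp add: assoc mem_m)
  also have "\<dots> = m x (iv x)" using inv_props[OF x] by simp
  finally show ?thesis using x i by (simp add: E_iff G_iff mem_m)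
qed

end

locale cgrp = tcs +
  fixes e
  assumes eE: "e \<in> E"
begin

abbreviation "Ge \<equiv> G e"

lemma eS[simp]: "e \<in> S" using eE by (simp add: E_iff)
lemma ee[simp]: "m e e = e" using eE by (simp add: E_iff)
lemma ive[simp]: "iv e = e" using eE by (rule inv_idem)
lemma eGe[simp]: "e \<in> Ge" using eE by (rule e_in_G)

lemma GS[simp]: "x \<in> Ge \<Longrightarrow> x \<in> S" by (simp add: G_iff)
lemma rinv[simp]: "x \<in> Ge \<Longrightarrow> m x (iv x) = e" by (simp add: G_iff)
lemma linv[simp]: "x \<in> Ge \<Longrightarrow> m (iv x) x = e"
proof -
  assume "x \<in> Ge"
  then have "x \<in> S" "m x (iv x) = e" unfolding G_iff by auto
  then show ?thesis using inv_comm[of x] by simp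
qed
lemma ivS[simp]: "x \<in> Ge \<Longrightarrow> iv x \<in> S" using inv_props GS by blast

lemma lid[simp]: "x \<in> Ge \<Longrightarrow> m e x = x"
proof -
  assume x: "x \<in> Ge"
  have "m e x = m (m x (iv x)) x" using x by simp
  also have "\<dots> = x" using inv_props[of x] x by simp
  finally show ?thesis .
qed

lemma rid[simp]: "x \<in> Ge \<Longrightarrow> m x e = x"
proof -
  assume x: "x \<in> Ge"
  have "m x e = m x (m (iv x) x)" using x by simp
  also have "\<dots> = m (m x (iv x)) x" by (rule assoc[symmetric]) (use x in simp_all)
  also have "\<dots> = x" using x by simp
  finally show ?thesis .
qed

lemma ivv[simp]: "x \<in> Ge \<Longrightarrow> iv (iv x) = x"
  by (rule inv_uniq) (use inv_props[of x] in auto)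

lemma ivG[simp]: "x \<in> Ge \<Longrightarrow> iv x \<in> Ge"
proof -
  assume x: "x \<in> Ge"
  then have "m (iv x) (iv (iv x)) = e" by simp
  then show ?thesis unfolding G_iff using x by simp
qed

lemma assocG: "x \<in> Ge \<Longrightarrow> y \<in> Ge \<Longrightarrow> z \<in> Ge \<Longrightarrow> m (m x y) z = m x (m y z)"
  by (simp add: assoc)

lemma mul_inv:
  assumes x: "x \<in> Ge" and y: "y \<in> Ge"
  shows "iv (m x y) = m (iv y) (iv x) \<and> m x y \<in> Ge"
proof -
  have xyS: "m x y \<in> S" using x y by (simp add: mem_m)
  have cS: "m (iv y) (iv x) \<in> S" using x y by (simp add: mem_m)
  have 1: "m (m x y) (m (iv y) (iv x)) = e"
  proof -
    have "m (m x y) (m (iv y) (iv x)) = m x (m (m y (iv y)) (iv x))"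
      using x y by (simp only: assoc mem_m GS ivS)
    also have "\<dots> = e" using x y by simp
    finally show ?thesis .
  qed
  have 2: "m (m (iv y) (iv x)) (m x y) = e"
  proof -
    have "m (m (iv y) (iv x)) (m x y) = m (iv y) (m (m (iv x) x) y)"
      using x y by (simp only: assoc mem_m GS ivS)
    also have "\<dots> = e" using x y by simp
    finally show ?thesis .
  qed
  have 3: "m e (m x y) = m x y"
  proof -
    have "m e (m x y) = m (m e x) y" by (rule assoc[symmetric]) (use x y in simp_all)
    also have "\<dots> = m x y" using x by simp
    finally show ?thesis .
  qed
  have 4: "m e (m (iv y) (iv x)) = m (iv y) (iv x)"
  proof -
    have "m e (m (iv y) (iv x)) = m (m e (iv y)) (iv x)" by (rule assoc[symmetric]) (use x y in simp_all)
    also have "\<dots> = m (iv y) (iv x)" using y by simp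
    finally show ?thesis .
  qed
  have "iv (m x y) = m (iv y) (iv x)"
    by (rule inv_uniq) (use xyS cS 1 2 3 4 in auto)
  moreover have "m x y \<in> Ge" unfolding G_iff using xyS 1 calculation by simp
  ultimately show ?thesis by blast
qed

lemma mG[simp]: "x \<in> Ge \<Longrightarrow> y \<in> Ge \<Longrightarrow> m x y \<in> Ge"
  using mul_inv by blast

lemma ivm[simp]: "x \<in> Ge \<Longrightarrow> y \<in> Ge \<Longrightarrow> iv (m x y) = m (iv y) (iv x)"
  using mul_inv by blast

lemma canc1[simp]: "x \<in> Ge \<Longrightarrow> y \<in> Ge \<Longrightarrow> m x (m (iv x) y) = y"
proof -
  assume x: "x \<in> Ge" and y: "y \<in> Ge"
  have "m x (m (iv x) y) = m (m x (iv x)) y" by (rule assoc[symmetric]) (use x y in simp_all)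
  also have "\<dots> = y" using x y by simp
  finally show ?thesis .
qed

lemma canc2[simp]: "x \<in> Ge \<Longrightarrow> y \<in> Ge \<Longrightarrow> m (iv x) (m x y) = y"
proof -
  assume x: "x \<in> Ge" and y: "y \<in> Ge"
  have "m (iv x) (m x y) = m (m (iv x) x) y" by (rule assoc[symmetric]) (use x y in simp_all)
  also have "\<dots> = y" using x y by simp
  finally show ?thesis .
qed

lemmas assocS = assoc

end


context tcs
begin

lemma cont_m: "continuous_map (prod_topology X X) X (\<lambda>(x,y). m x y)"
  using tcs by (simp add: topological_clifford_semigroup_def)

lemma cont_iv: "continuous_map X X iv"
  using tcs by (simp add: topological_clifford_semigroup_def)

lemma contI2:
  assumes "continuous_map Z X f" "continuous_map Z X g"
  shows "continuous_map Z X (\<lambda>z. m (f z) (g z))"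
proof -
  have "continuous_map Z X ((\<lambda>(x,y). m x y) \<circ> (\<lambda>z. (f z, g z)))"
    by (rule continuous_map_compose[OF continuous_map_pairedI[OF assms] cont_m])
  then show ?thesis by (simp add: o_def)
qed

lemma contI1:
  assumes "continuous_map Z X f"
  shows "continuous_map Z X (\<lambda>z. iv (f z))"
proof -
  have "continuous_map Z X (iv \<circ> f)"
    by (rule continuous_map_compose[OF assms cont_iv])
  then show ?thesis by (simp add: o_def)
qed

lemma contC: "c \<in> S \<Longrightarrow> continuous_map Z X (\<lambda>z. c)"
  by simp

lemma contId: "continuous_map X X (\<lambda>z. z)"
  by simp

lemma contFst: "continuous_map (prod_topology X X) X fst"
  by (rule continuous_map_fst)

lemma contSnd: "continuous_map (prod_topology X X) X snd"
  by (rule continuous_map_snd)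

lemma nbhd2:
  assumes h: "continuous_map (prod_topology X X) X h" and a: "a \<in> S"
    and U: "openin X U" and haa: "h (a,a) \<in> U"
  obtains W where "openin X W" "a \<in> W" "\<And>p q. p \<in> W \<Longrightarrow> q \<in> W \<Longrightarrow> h (p,q) \<in> U"
proof -
  define Op where "Op = {z \<in> topspace (prod_topology X X). h z \<in> U}"
  have "openin (prod_topology X X) Op"
    unfolding Op_def using h U by (rule openin_continuous_map_preimage)
  then have Oalt: "\<forall>x y. (x,y) \<in> Op \<longrightarrow> (\<exists>U V. openin X U \<and> openin X V \<and> x \<in> U \<and> y \<in> V \<and> U \<times> V \<subseteq> Op)"
    by (simp only: openin_prod_topology_alt)
  have aa: "(a,a) \<in> Op" using a haa by (simp add: Op_def)
  from Oalt[rule_format, OF aa] obtain U1 U2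
    where U12': "openin X U1 \<and> openin X U2 \<and> a \<in> U1 \<and> a \<in> U2 \<and> U1 \<times> U2 \<subseteq> Op"
    by blast
  then have U12: "openin X U1" "openin X U2" "a \<in> U1" "a \<in> U2" "U1 \<times> U2 \<subseteq> Op"
    by auto
  show thesis
  proof (rule that[of "U1 \<inter> U2"])
    show "openin X (U1 \<inter> U2)" using U12 by (simp add: openin_Int)
    show "a \<in> U1 \<inter> U2" using U12 by simp
    fix p q assume "p \<in> U1 \<inter> U2" "q \<in> U1 \<inter> U2"
    then have "(p,q) \<in> Op" using U12(5) by blast
    then show "h (p,q) \<in> U" by (simp add: Op_def)
  qed
qed

end

locale ccs = tcs +
  assumes hd: "Hausdorff_space X"
    and cc: "countably_compact_space X"
    and ss: "strong_semilattice_of_top_groups X m"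
begin

lemma ss_open: "U \<subseteq> S \<Longrightarrow> openin X U \<longleftrightarrow> (\<forall>e\<in>E. openin (subtopology X (G e)) (U \<inter> G e))"
  using ss unfolding strong_semilattice_of_top_groups_def Let_def by blast

lemma G_sub: "G e \<subseteq> S"
  by (auto simp: G_iff)

lemma G_disj: "x \<in> G e \<Longrightarrow> x \<in> G f \<Longrightarrow> e = f"
  by (simp add: G_iff)

lemma G_open: "e \<in> E \<Longrightarrow> openin X (G e)"
proof -
  assume eE: "e \<in> E"
  have "openin (subtopology X (G f)) (G e \<inter> G f)" if "f \<in> E" for f
  proof (cases "f = e")
    case True
    then show ?thesis using G_sub by (simp add: openin_subtopology_refl)
  next
    case False
    then have "G e \<inter> G f = {}" using G_disj by blast
    then show ?thesis by simp
  qed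
  then show ?thesis using ss_open[OF G_sub] by blast
qed

lemma G_closed: "e \<in> E \<Longrightarrow> closedin X (G e)"
proof -
  assume eE: "e \<in> E"
  have "openin (subtopology X (G f)) ((S - G e) \<inter> G f)" if "f \<in> E" for f
  proof (cases "f = e")
    case True
    then have "(S - G e) \<inter> G f = {}" by blast
    then show ?thesis by simp
  next
    case False
    then have "(S - G e) \<inter> G f = G f" using G_disj G_sub by blast
    then show ?thesis using G_sub by (simp add: openin_subtopology_refl)
  qed
  then have "openin X (S - G e)" using ss_open[of "S - G e"] by blast
  then show ?thesis using G_sub by (simp add: closedin_def)
qed

lemma E_finite: "finite E"
proof (rule ccontr)
  assume "infinite E"
  then obtain f :: "nat \<Rightarrow> 'a" where f: "inj f" "range f \<subseteq> E"
    using infinite_countable_subset by blast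
  have fG: "f n \<in> G (f n)" for n using f(2) e_in_G by blast
  define Oi where "Oi = \<Union>{G e | e. e \<in> E - range f}"
  have Oo: "openin X Oi" unfolding Oi_def using G_open by (intro openin_Union) blast
  define C where "C = insert Oi (range (\<lambda>n. G (f n)))"
  have "countable C" unfolding C_def by simp
  moreover have "\<forall>U\<in>C. openin X U" unfolding C_def using Oo G_open f(2) by blast
  moreover have "S \<subseteq> \<Union>C"
  proof
    fix x assume x: "x \<in> S"
    then have xE: "m x (iv x) \<in> E" and xG: "x \<in> G (m x (iv x))" using cover_G by blast+
    show "x \<in> \<Union>C"
    proof (cases "m x (iv x) \<in> range f")
      case True
      then obtain n where "m x (iv x) = f n" by blast
      then have "x \<in> G (f n)" using xG by simp
      then show ?thesis unfolding C_def by blast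
    next
      case False
      then have "x \<in> Oi" unfolding Oi_def using xE xG by blast
      then show ?thesis unfolding C_def by blast
    qed
  qed
  ultimately obtain F where F: "F \<subseteq> C" "finite F" "S \<subseteq> \<Union>F"
    using cc unfolding countably_compact_space_def by meson
  have injG: "inj (\<lambda>n. G (f n))"
  proof (rule injI)
    fix a b assume "G (f a) = G (f b)"
    then have "f a \<in> G (f b)" using fG[of a] by simp
    then have "f a = f b" using G_disj fG by blast
    then show "a = b" using f(1) by (simp add: inj_eq)
  qed
  have "finite ((\<lambda>n. G (f n)) -` F)" using finite_vimageI[OF F(2) injG] .
  then obtain n where n: "n \<notin> (\<lambda>n. G (f n)) -` F"
    by (meson ex_new_if_finite infinite_UNIV_nat)
  have "f n \<in> S" using fG G_sub by blast
  then obtain A where A: "A \<in> F" "f n \<in> A" using F(3) by blast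
  then have "A \<in> C" using F(1) by blast
  then consider "A = Oi" | k where "A = G (f k)" unfolding C_def by blast
  then show False
  proof cases
    case 1
    then obtain e where "e \<in> E - range f" "f n \<in> G e" using A(2) unfolding Oi_def by blast
    then show False using G_disj fG by blast
  next
    case 2
    then have "f n = f k" using A(2) G_disj fG by blast
    then have "n = k" using f(1) by (simp add: inj_eq)
    then show False using n A(1) 2 by simp
  qed
qed

lemma EG: "e \<in> E \<Longrightarrow> E \<inter> G e = {e}"
  using e_in_G inv_idem by (auto simp: G_iff E_iff)

end

locale cgrpc = ccs + cgrp
begin

lemmas assocG' [simp] = assocG

lemma GeO: "openin X Ge" using G_open eE by blast
lemma GeC: "closedin X Ge" using G_closed eE by blast

lemma reg_pt:
  assumes x: "x \<in> Ge" and U: "openin X U" "x \<in> U"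
  obtains V where "openin X V" "x \<in> V" "X closure_of V \<subseteq> U"
proof -
  let ?h = "\<lambda>z. m (m (fst z) (iv (snd z))) x"
  have hc: "continuous_map (prod_topology X X) X ?h"
    by (intro contI2 contI1 contFst contSnd contC) (use x in simp)
  have hxx: "?h (x,x) \<in> U" using x U by simp
  obtain W where W: "openin X W" "x \<in> W" "\<And>p q. p \<in> W \<Longrightarrow> q \<in> W \<Longrightarrow> ?h (p,q) \<in> U"
    using nbhd2[OF hc GS[OF x] U(1) hxx] by blast
  define V where "V = W \<inter> Ge"
  have Vo: "openin X V" unfolding V_def using W(1) GeO by (rule openin_Int)
  have xV: "x \<in> V" using W x by (simp add: V_def)
  have "X closure_of V \<subseteq> U"
  proof
    fix y assume y: "y \<in> X closure_of V"
    have "X closure_of V \<subseteq> Ge" by (rule closure_of_minimal) (auto simp: V_def GeC)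
    then have yG: "y \<in> Ge" using y by blast
    define N where "N = {z \<in> S. m (m x (iv y)) z \<in> V}"
    have No: "openin X N" unfolding N_def
      by (rule openin_continuous_map_preimage[OF contI2[OF contC contId] Vo]) (use x yG in simp)
    have yN: "y \<in> N" using x yG xV by (simp add: N_def)
    obtain z where z: "z \<in> V" "z \<in> N" using y No yN unfolding in_closure_of by blast
    define b where "b = m (m x (iv y)) z"
    have zG: "z \<in> Ge" using z by (simp add: V_def)
    have bV: "b \<in> V" using z by (simp add: N_def b_def)
    have "?h (z,b) \<in> U" using W(3) z(1) bV by (simp add: V_def)
    moreover have "?h (z,b) = y" using x yG zG by (simp add: b_def)
    ultimately show "y \<in> U" by simp
  qed
  then show thesis using that Vo xV by blast
qed

lemma local_base:
  assumes gd: "gdelta_in (subtopology X Ge) {e}"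
  obtains \<V> where "countable \<V>" "\<And>V. V \<in> \<V> \<Longrightarrow> openin X V \<and> e \<in> V \<and> V \<subseteq> Ge"
    "\<And>U. openin X U \<Longrightarrow> e \<in> U \<Longrightarrow> \<exists>V\<in>\<V>. V \<subseteq> U"
proof -
  obtain \<U> where Uc: "countable \<U>" and Uo: "\<U> \<subseteq> Collect (openin (subtopology X Ge))"
      and Ui: "\<Inter>\<U> = {e}"
    using gd unfolding gdelta_in_alt intersection_of_def by blast
  have UoX: "openin X T \<and> e \<in> T" if "T \<in> \<U>" for T
    using that Uo Ui openin_open_subtopology[OF GeO] by blast
  have "\<forall>T\<in>\<U>. \<exists>W. openin X W \<and> e \<in> W \<and> X closure_of W \<subseteq> T"
  proof
    fix T assume "T \<in> \<U>"
    then have "openin X T" "e \<in> T" using UoX by blast+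
    then obtain V where "openin X V" "e \<in> V" "X closure_of V \<subseteq> T"
      using reg_pt[OF eGe] by metis
    then show "\<exists>W. openin X W \<and> e \<in> W \<and> X closure_of W \<subseteq> T" by blast
  qed
  then obtain W where W: "\<forall>T\<in>\<U>. openin X (W T) \<and> e \<in> W T \<and> X closure_of (W T) \<subseteq> T"
    by (rule bchoice[elim_format]) blast
  define \<V> where "\<V> = (\<lambda>F. Ge \<inter> \<Inter>(W ` F)) ` {F. finite F \<and> F \<subseteq> \<U>}"
  have "countable \<V>" unfolding \<V>_def
    by (rule countable_image) (rule countable_Collect_finite_subset[OF Uc])
  moreover have "openin X V \<and> e \<in> V \<and> V \<subseteq> Ge" if V: "V \<in> \<V>" for V
  proof -
    obtain F where F: "finite F" "F \<subseteq> \<U>" "V = Ge \<inter> \<Inter>(W ` F)"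
      using V unfolding \<V>_def by blast
    have "openin X (Ge \<inter> \<Inter>(W ` F))"
      by (rule openin_Int_Inter) (use F W GeO in auto)
    moreover have "e \<in> Ge \<inter> \<Inter>(W ` F)" using F W by auto
    ultimately show ?thesis using F(3) by blast
  qed
  moreover have "\<exists>V\<in>\<V>. V \<subseteq> U" if U: "openin X U" "e \<in> U" for U
  proof -
    define \<C> where "\<C> = insert U ((\<lambda>T. S - X closure_of (W T)) ` \<U>)"
    have "countable \<C>" unfolding \<C>_def using Uc by simp
    moreover have "\<forall>A\<in>\<C>. openin X A" unfolding \<C>_def using U(1)
      by (auto intro: openin_diff closedin_closure_of)
    moreover have "S \<subseteq> \<Union>\<C>"
    proof
      fix y assume y: "y \<in> S"
      show "y \<in> \<Union>\<C>"
      proof (cases "y \<in> U")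
        case True then show ?thesis by (simp add: \<C>_def)
      next
        case False
        then have "y \<noteq> e" using U(2) by blast
        then have "y \<notin> \<Inter>\<U>" using Ui by simp
        then obtain T where T: "T \<in> \<U>" "y \<notin> T" by blast
        then have "y \<notin> X closure_of (W T)" using W by blast
        then show ?thesis using y T(1) unfolding \<C>_def by blast
      qed
    qed
    ultimately obtain \<F> where F: "\<F> \<subseteq> \<C>" "finite \<F>" "S \<subseteq> \<Union>\<F>"
      using cc unfolding countably_compact_space_def by meson
    have "\<F> - {U} \<subseteq> (\<lambda>T. S - X closure_of (W T)) ` \<U>" using F(1) unfolding \<C>_def by blast
    then obtain F0 where F0: "F0 \<subseteq> \<U>" "finite F0" "\<F> - {U} = (\<lambda>T. S - X closure_of (W T)) ` F0"
      using finite_subset_image[of "\<F> - {U}"] F(2) by (metis finite_Diff)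
    have "Ge \<inter> \<Inter>(W ` F0) \<subseteq> U"
    proof
      fix z assume z: "z \<in> Ge \<inter> \<Inter>(W ` F0)"
      then have "z \<in> S" by auto
      then obtain A where A: "A \<in> \<F>" "z \<in> A" using F(3) by blast
      show "z \<in> U"
      proof (rule ccontr)
        assume "z \<notin> U"
        then have "A \<in> \<F> - {U}" using A by blast
        then obtain T where T: "T \<in> F0" "A = S - X closure_of (W T)" using F0(3) by blast
        have "W T \<subseteq> S" using W T F0(1) openin_subset by blast
        then have "z \<in> X closure_of (W T)" using z T(1) closure_of_subset by blast
        then show False using A(2) T(2) by blast
      qed
    qed
    moreover have "Ge \<inter> \<Inter>(W ` F0) \<in> \<V>" unfolding \<V>_def using F0 by blast
    ultimately show ?thesis by blast
  qed
  ultimately show thesis using that by blast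
qed


definition Tr where "Tr a U = {y \<in> Ge. m (iv a) y \<in> U}"

lemma Tr_open: "a \<in> Ge \<Longrightarrow> openin X U \<Longrightarrow> openin X (Tr a U)"
  unfolding Tr_def
  by (rule openin_continuous_map_preimage_gen[OF contI2[OF contC contId] GeO]) simp_all

lemma Tr_self: "a \<in> Ge \<Longrightarrow> e \<in> U \<Longrightarrow> a \<in> Tr a U"
  by (simp add: Tr_def)

lemma precompact:
  assumes V: "openin X V" "e \<in> V"
  shows "\<exists>F. finite F \<and> F \<subseteq> Ge \<and> Ge \<subseteq> (\<Union>a\<in>F. Tr a V)"
proof (rule ccontr)
  assume ncov: "\<not> (\<exists>F. finite F \<and> F \<subseteq> Ge \<and> Ge \<subseteq> (\<Union>a\<in>F. Tr a V))"
  let ?h1 = "\<lambda>z. m (fst z) (iv (snd z))"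
  have hc1: "continuous_map (prod_topology X X) X ?h1"
    by (intro contI2 contI1 contFst contSnd)
  have h1e: "?h1 (e,e) \<in> V" using V by simp
  obtain W1 where W1: "openin X W1" "e \<in> W1" "\<And>p q. p \<in> W1 \<Longrightarrow> q \<in> W1 \<Longrightarrow> ?h1 (p,q) \<in> V"
    using nbhd2[OF hc1 eS V(1) h1e] by blast
  define W where "W = W1 \<inter> Ge"
  have Wo: "openin X W" unfolding W_def using W1(1) GeO by (rule openin_Int)
  have eW: "e \<in> W" using W1 by (simp add: W_def)
  have WG: "W \<subseteq> Ge" by (simp add: W_def)
  have WV: "m p (iv q) \<in> V" if "p \<in> W" "q \<in> W" for p q
    using W1(3)[of p q] that by (simp add: W_def)
  let ?h2 = "\<lambda>z. m (fst z) (snd z)"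
  have hc2: "continuous_map (prod_topology X X) X ?h2"
    by (intro contI2 contFst contSnd)
  have h2e: "?h2 (e,e) \<in> W" using eW by simp
  obtain W3 where W3: "openin X W3" "e \<in> W3" "\<And>p q. p \<in> W3 \<Longrightarrow> q \<in> W3 \<Longrightarrow> ?h2 (p,q) \<in> W"
    using nbhd2[OF hc2 eS Wo h2e] by blast
  define W2 where "W2 = W3 \<inter> Ge"
  have W2o: "openin X W2" unfolding W2_def using W3(1) GeO by (rule openin_Int)
  have eW2: "e \<in> W2" using W3 by (simp add: W2_def)
  have W2G: "W2 \<subseteq> Ge" by (simp add: W2_def)
  have W2W: "m p q \<in> W" if "p \<in> W2" "q \<in> W2" for p q
    using W3(3)[of p q] that by (simp add: W2_def)
  define sep where "sep A \<longleftrightarrow> (\<forall>a\<in>A. \<forall>b\<in>A. a \<noteq> b \<longrightarrow> m (iv a) b \<notin> V \<or> m (iv b) a \<notin> V)" for A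
  define P where "P n A \<longleftrightarrow> finite A \<and> card A = n \<and> A \<subseteq> Ge \<and> sep A" for n A
  have P0: "P 0 {}" by (simp add: P_def sep_def)
  have step: "\<exists>B. P (Suc n) B \<and> A \<subseteq> B" if PA: "P n A" for n A
  proof -
    have fA: "finite A" "A \<subseteq> Ge" using PA by (auto simp: P_def)
    then have "\<not> Ge \<subseteq> (\<Union>a\<in>A. Tr a V)" using ncov by blast
    then obtain y where y: "y \<in> Ge" "\<And>a. a \<in> A \<Longrightarrow> m (iv a) y \<notin> V"
      by (auto simp: Tr_def)
    have yA: "y \<notin> A"
    proof
      assume "y \<in> A"
      then have "m (iv y) y \<notin> V" using y(2) by blast
      then show False using y(1) V(2) by simp
    qed
    have "sep (insert y A)"
      unfolding sep_def
    proof (intro ballI impI)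
      fix a b assume ab: "a \<in> insert y A" "b \<in> insert y A" "a \<noteq> b"
      show "m (iv a) b \<notin> V \<or> m (iv b) a \<notin> V"
      proof (cases "a = y")
        case True
        then have "b \<in> A" using ab by blast
        then show ?thesis using y(2) True by blast
      next
        case False
        then have aA: "a \<in> A" using ab by blast
        show ?thesis
        proof (cases "b = y")
          case True
          then show ?thesis using y(2) aA by blast
        next
          case False
          then have "b \<in> A" using ab by blast
          then show ?thesis using aA ab(3) PA by (simp add: P_def sep_def)
        qed
      qed
    qed
    moreover have "card (insert y A) = Suc n" using fA(1) yA PA by (simp add: P_def)
    ultimately have "P (Suc n) (insert y A)" using fA y(1) by (simp add: P_def)
    then show ?thesis by blast
  qed
  obtain Af where Af: "\<And>n. P n (Af n) \<and> Af n \<subseteq> Af (Suc n)"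
  proof -
    have ex0: "\<exists>A. P 0 A" using P0 by blast
    show ?thesis using dependent_nat_choice[of P "\<lambda>n A B. A \<subseteq> B", OF ex0 step] that by blast
  qed
  have Afmono: "Af i \<subseteq> Af j" if "i \<le> j" for i j
    using lift_Suc_mono_le[of Af, OF _ that] Af by blast
  define A where "A = \<Union>(range Af)"
  have AG: "A \<subseteq> Ge" using Af by (auto simp: A_def P_def)
  have Ainf: "infinite A"
  proof
    assume fin: "finite A"
    have "card (Af (Suc (card A))) \<le> card A"
      by (rule card_mono[OF fin]) (auto simp: A_def)
    moreover have "card (Af (Suc (card A))) = Suc (card A)" using Af by (simp add: P_def)
    ultimately show False by simp
  qed
  have sepA: "m (iv a) b \<notin> V \<or> m (iv b) a \<notin> V" if ab: "a \<in> A" "b \<in> A" "a \<noteq> b" for a b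
  proof -
    obtain i j where "a \<in> Af i" "b \<in> Af j" using ab(1,2) by (auto simp: A_def)
    then have "a \<in> Af (max i j)" "b \<in> Af (max i j)" using Afmono by (meson max.cobounded1 max.cobounded2 subsetD)+
    moreover have "sep (Af (max i j))" using Af by (simp add: P_def)
    ultimately show ?thesis using ab(3) by (simp add: sep_def)
  qed
  obtain g :: "nat \<Rightarrow> 'a" where g: "inj g" "range g \<subseteq> A"
    using infinite_countable_subset[OF Ainf] by blast
  have gG: "g n \<in> Ge" for n using g AG by blast
  have disj: "Tr (g i) W \<inter> Tr (g j) W = {}" if "i \<noteq> j" for i j
  proof (rule ccontr)
    assume "Tr (g i) W \<inter> Tr (g j) W \<noteq> {}"
    then obtain y where y: "y \<in> Ge" "m (iv (g i)) y \<in> W" "m (iv (g j)) y \<in> W" by (auto simp: Tr_def)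
    have "m (m (iv (g i)) y) (iv (m (iv (g j)) y)) \<in> V" using WV y by blast
    then have 1: "m (iv (g i)) (g j) \<in> V" using y(1) gG by simp
    have "m (m (iv (g j)) y) (iv (m (iv (g i)) y)) \<in> V" using WV y by blast
    then have 2: "m (iv (g j)) (g i) \<in> V" using y(1) gG by simp
    have "g i \<noteq> g j" using g(1) that by (simp add: inj_eq)
    then show False using sepA[of "g i" "g j"] g(2) 1 2 by blast
  qed
  have gT: "g n \<in> Tr (g n) W" "g n \<in> Tr (g n) W2" for n
    using gG eW eW2 by (simp_all add: Tr_self)
  define Oinf where "Oinf = S - X closure_of (\<Union>n. Tr (g n) W2)"
  define C where "C = insert Oinf (insert (S - Ge) (range (\<lambda>n. Tr (g n) W)))"
  have "countable C" unfolding C_def by simp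
  moreover have "\<forall>U\<in>C. openin X U"
    unfolding C_def Oinf_def using Tr_open[OF gG Wo] GeC
    by (auto intro: openin_diff closedin_closure_of)
  moreover have "S \<subseteq> \<Union>C"
  proof
    fix y assume yS: "y \<in> S"
    show "y \<in> \<Union>C"
    proof (cases "y \<in> Ge \<and> y \<in> X closure_of (\<Union>n. Tr (g n) W2)")
      case False
      then show ?thesis using yS unfolding C_def Oinf_def by blast
    next
      case True
      then have yG: "y \<in> Ge" and ycl: "y \<in> X closure_of (\<Union>n. Tr (g n) W2)" by auto
      define N where "N = {z \<in> S. m (iv z) y \<in> W2}"
      have No: "openin X N" unfolding N_def
        by (rule openin_continuous_map_preimage[OF contI2[OF contI1[OF contId] contC] W2o]) (use yG in simp)
      have yN: "y \<in> N" using yG eW2 by (simp add: N_def)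
      obtain z where z: "z \<in> (\<Union>n. Tr (g n) W2)" "z \<in> N"
        using ycl No yN unfolding in_closure_of by blast
      then obtain n where zn: "z \<in> Ge" "m (iv (g n)) z \<in> W2" by (auto simp: Tr_def)
      have "m (iv z) y \<in> W2" using z(2) by (simp add: N_def)
      then have "m (m (iv (g n)) z) (m (iv z) y) \<in> W" using W2W zn(2) by blast
      then have "m (iv (g n)) y \<in> W" using zn(1) yG gG by simp
      then have "y \<in> Tr (g n) W" using yG by (simp add: Tr_def)
      then show ?thesis unfolding C_def by blast
    qed
  qed
  ultimately obtain F where F: "F \<subseteq> C" "finite F" "S \<subseteq> \<Union>F"
    using cc unfolding countably_compact_space_def by meson
  have injT: "inj (\<lambda>n. Tr (g n) W)"
  proof (rule injI)
    fix i j assume eq: "Tr (g i) W = Tr (g j) W"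
    show "i = j"
    proof (rule ccontr)
      assume "i \<noteq> j"
      then have "Tr (g i) W \<inter> Tr (g j) W = {}" by (rule disj)
      then show False using eq gT(1)[of i] by blast
    qed
  qed
  have "finite ((\<lambda>n. Tr (g n) W) -` F)" using finite_vimageI[OF F(2) injT] .
  then obtain n where n: "n \<notin> (\<lambda>n. Tr (g n) W) -` F"
    by (meson ex_new_if_finite infinite_UNIV_nat)
  have "g n \<in> S" using gG by simp
  then obtain B where B: "B \<in> F" "g n \<in> B" using F(3) by blast
  then have "B \<in> C" using F(1) by blast
  then consider "B = Oinf" | "B = S - Ge" | k where "B = Tr (g k) W" unfolding C_def by blast
  then show False
  proof cases
    case 1
    have "(\<Union>n. Tr (g n) W2) \<subseteq> S" by (auto simp: Tr_def)
    then have "g n \<in> X closure_of (\<Union>n. Tr (g n) W2)" using gT(2)[of n] closure_of_subset by blast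
    then show False using B(2) 1 by (simp add: Oinf_def)
  next
    case 2
    then show False using B(2) gG by simp
  next
    case 3
    then have "k \<noteq> n" using n B(1) by auto
    then have "Tr (g k) W \<inter> Tr (g n) W = {}" by (rule disj)
    then show False using B(2) 3 gT(1)[of n] by blast
  qed
qed

lemma sc_piece:
  assumes gd: "gdelta_in (subtopology X Ge) {e}"
  obtains \<B> where "countable \<B>" "\<And>B. B \<in> \<B> \<Longrightarrow> openin X B"
    "\<And>U y. openin X U \<Longrightarrow> y \<in> U \<Longrightarrow> y \<in> Ge \<Longrightarrow> \<exists>B\<in>\<B>. y \<in> B \<and> B \<subseteq> U"
proof -
  obtain \<V> where Vc: "countable \<V>" and VV: "\<And>V. V \<in> \<V> \<Longrightarrow> openin X V \<and> e \<in> V \<and> V \<subseteq> Ge"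
    and Vb: "\<And>U. openin X U \<Longrightarrow> e \<in> U \<Longrightarrow> \<exists>V\<in>\<V>. V \<subseteq> U"
    using local_base[OF gd] by blast
  have "\<forall>V\<in>\<V>. \<exists>F. finite F \<and> F \<subseteq> Ge \<and> Ge \<subseteq> (\<Union>a\<in>F. Tr a V)"
    using VV precompact by blast
  then obtain Fs where Fs: "\<forall>V\<in>\<V>. finite (Fs V) \<and> Fs V \<subseteq> Ge \<and> Ge \<subseteq> (\<Union>a\<in>Fs V. Tr a V)"
    by (rule bchoice[elim_format]) blast
  define \<B> where "\<B> = (\<Union>V\<in>\<V>. (\<lambda>a. Tr a V) ` Fs V)"
  have "countable \<B>" unfolding \<B>_def
    using Vc Fs by (intro countable_UN) (auto intro: countable_finite)
  moreover have "openin X B" if "B \<in> \<B>" for B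
    using that Fs VV Tr_open unfolding \<B>_def by blast
  moreover have "\<exists>B\<in>\<B>. y \<in> B \<and> B \<subseteq> U" if U: "openin X U" "y \<in> U" "y \<in> Ge" for U y
  proof -
    let ?h = "\<lambda>z. m y (m (iv (fst z)) (snd z))"
    have hc: "continuous_map (prod_topology X X) X ?h"
      by (intro contI2 contI1 contFst contSnd contC) (use U in simp)
    have he: "?h (e,e) \<in> U" using U by simp
    obtain W where W: "openin X W" "e \<in> W" "\<And>p q. p \<in> W \<Longrightarrow> q \<in> W \<Longrightarrow> ?h (p,q) \<in> U"
      using nbhd2[OF hc eS U(1) he] by blast
    obtain V where V: "V \<in> \<V>" "V \<subseteq> W" using Vb[OF W(1,2)] by blast
    then obtain a where a: "a \<in> Fs V" "y \<in> Tr a V" using Fs U(3) by blast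
    have aG: "a \<in> Ge" using a(1) V(1) Fs by blast
    have "Tr a V \<subseteq> U"
    proof
      fix z assume z: "z \<in> Tr a V"
      have "?h (m (iv a) y, m (iv a) z) \<in> U"
        using W(3) V(2) a(2) z by (auto simp: Tr_def)
      moreover have "?h (m (iv a) y, m (iv a) z) = z"
        using aG U(3) z by (simp add: Tr_def)
      ultimately show "z \<in> U" by simp
    qed
    moreover have "Tr a V \<in> \<B>" unfolding \<B>_def using V(1) a(1) by blast
    ultimately show ?thesis using a(2) by blast
  qed
  ultimately show thesis using that by blast
qed

end


context ccs
begin

lemma cg: "e \<in> E \<Longrightarrow> cgrpc X m e"
  by unfold_locales

lemma finite_gdelta: "finite A \<Longrightarrow> (\<And>x. x \<in> A \<Longrightarrow> gdelta_in X {x}) \<Longrightarrow> gdelta_in X A"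
proof (induction A rule: finite_induct)
  case empty
  then show ?case by simp
next
  case (insert x F)
  have a: "gdelta_in X {x}" using insert.prems by blast
  have b: "gdelta_in X F" using insert.IH insert.prems by blast
  have "gdelta_in X ({x} \<union> F)" using a b by (rule gdelta_in_Un)
  then show ?case by simp
qed

lemma finite_closed: "finite A \<Longrightarrow> A \<subseteq> S \<Longrightarrow> closedin X A"
proof (induction A rule: finite_induct)
  case empty
  then show ?case by simp
next
  case (insert x F)
  have "x \<in> S" using insert.prems by blast
  then have a: "closedin X {x}" using hd by (simp add: closedin_Hausdorff_singleton)
  have b: "closedin X F" using insert.IH insert.prems by blast
  have "closedin X ({x} \<union> F)" using a b by (rule closedin_Un)
  then show ?case by simp
qed

lemma gd_equiv: "gdelta_in X E \<longleftrightarrow> (\<forall>e\<in>E. gdelta_in (subtopology X (G e)) {e})"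
proof
  assume gd: "gdelta_in X E"
  show "\<forall>e\<in>E. gdelta_in (subtopology X (G e)) {e}"
  proof
    fix e assume e: "e \<in> E"
    have "{e} = E \<inter> G e" using EG[OF e] by simp
    then show "gdelta_in (subtopology X (G e)) {e}"
      using gd by (auto simp: gdelta_in_subtopology)
  qed
next
  assume H: "\<forall>e\<in>E. gdelta_in (subtopology X (G e)) {e}"
  have "gdelta_in X {e}" if e: "e \<in> E" for e
  proof -
    obtain T where T: "gdelta_in X T" "{e} = T \<inter> G e"
      using H e by (auto simp: gdelta_in_subtopology)
    have "gdelta_in X (G e)" using G_open[OF e] by (rule open_imp_gdelta_in)
    then have "gdelta_in X (T \<inter> G e)" using T(1) by (simp add: gdelta_in_Int)
    then show ?thesis using T(2) by simp
  qed
  then show "gdelta_in X E" using E_finite finite_gdelta by blast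
qed

lemma reg: "regular_space X"
  unfolding regular_space
proof (intro allI impI)
  fix C a assume Ca: "closedin X C \<and> a \<in> S - C"
  then have aS: "a \<in> S" by blast
  let ?f = "m a (iv a)"
  have fE: "?f \<in> E" and aG: "a \<in> G ?f" using cover_G[OF aS] by blast+
  have "openin X (S - C)" using Ca by blast
  then obtain V where V: "openin X V" "a \<in> V" "X closure_of V \<subseteq> S - C"
    using cgrpc.reg_pt[OF cg[OF fE] aG] Ca by blast
  then show "\<exists>U. openin X U \<and> a \<in> U \<and> disjnt C (X closure_of U)"
    by (auto simp: disjnt_def)
qed

lemma sc: "gdelta_in X E \<Longrightarrow> second_countable X"
proof -
  assume gd: "gdelta_in X E"
  then have H: "\<forall>e\<in>E. gdelta_in (subtopology X (G e)) {e}" using gd_equiv by blast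
  have "\<forall>e\<in>E. \<exists>\<B>. countable \<B> \<and> (\<forall>B\<in>\<B>. openin X B) \<and>
     (\<forall>U y. openin X U \<and> y \<in> U \<and> y \<in> G e \<longrightarrow> (\<exists>B\<in>\<B>. y \<in> B \<and> B \<subseteq> U))"
  proof
    fix e assume e: "e \<in> E"
    obtain \<B> where "countable \<B>" "\<And>B. B \<in> \<B> \<Longrightarrow> openin X B"
      "\<And>U y. openin X U \<Longrightarrow> y \<in> U \<Longrightarrow> y \<in> G e \<Longrightarrow> \<exists>B\<in>\<B>. y \<in> B \<and> B \<subseteq> U"
      using cgrpc.sc_piece[OF cg[OF e]] H e by metis
    then show "\<exists>\<B>. countable \<B> \<and> (\<forall>B\<in>\<B>. openin X B) \<and>
     (\<forall>U y. openin X U \<and> y \<in> U \<and> y \<in> G e \<longrightarrow> (\<exists>B\<in>\<B>. y \<in> B \<and> B \<subseteq> U))" by blast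
  qed
  then obtain Bs where Bs: "\<forall>e\<in>E. countable (Bs e) \<and> (\<forall>B\<in>Bs e. openin X B) \<and>
     (\<forall>U y. openin X U \<and> y \<in> U \<and> y \<in> G e \<longrightarrow> (\<exists>B\<in>Bs e. y \<in> B \<and> B \<subseteq> U))"
    by (rule bchoice[elim_format]) blast
  define \<B> where "\<B> = (\<Union>e\<in>E. Bs e)"
  have "countable \<B>" unfolding \<B>_def
    using Bs E_finite by (intro countable_UN) (auto intro: countable_finite)
  moreover have "\<forall>V\<in>\<B>. openin X V" using Bs unfolding \<B>_def by blast
  moreover have "\<exists>V\<in>\<B>. x \<in> V \<and> V \<subseteq> U" if U: "openin X U" "x \<in> U" for U x
  proof -
    have xS: "x \<in> S" using U openin_subset by blast
    let ?f = "m x (iv x)"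
    have fE: "?f \<in> E" and xG: "x \<in> G ?f" using cover_G[OF xS] by blast+
    then obtain B where "B \<in> Bs ?f" "x \<in> B" "B \<subseteq> U" using Bs U by blast
    then show ?thesis using fE unfolding \<B>_def by blast
  qed
  ultimately show "second_countable X" unfolding second_countable_def by blast
qed

lemma main: "(metrizable_space X \<longleftrightarrow> gdelta_in X E) \<and>
         (gdelta_in X E \<longleftrightarrow> (\<forall>e \<in> E. gdelta_in (subtopology X (G e)) {e}))"
proof
  show "metrizable_space X \<longleftrightarrow> gdelta_in X E"
  proof
    assume "metrizable_space X"
    moreover have "closedin X E" using E_finite by (rule finite_closed) (auto simp: E_iff)
    ultimately show "gdelta_in X E" by (rule closed_imp_gdelta_in)
  next
    assume "gdelta_in X E"
    then have "second_countable X" by (rule sc)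
    then show "metrizable_space X" using Urysohn_metrization reg hd by blast
  qed
  show "gdelta_in X E \<longleftrightarrow> (\<forall>e \<in> E. gdelta_in (subtopology X (G e)) {e})"
    by (rule gd_equiv)
qed

end

theorem proposition4p5:
  fixes X :: "'a topology" and m :: "'a \<Rightarrow> 'a \<Rightarrow> 'a"
  assumes "topological_clifford_semigroup X m"
    and "Hausdorff_space X"
    and "countably_compact_space X"
    and "strong_semilattice_of_top_groups X m"
  shows "(metrizable_space X \<longleftrightarrow> gdelta_in X (idempotents (topspace X) m)) \<and>
         (gdelta_in X (idempotents (topspace X) m) \<longleftrightarrow>
           (\<forall>e \<in> idempotents (topspace X) m.
              gdelta_in (subtopology X (group_component (topspace X) m e)) {e}))"
proof -
  interpret ccs X m
    using assms by unfold_locales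
  show ?thesis by (rule main)
qed

end
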